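(* Let $n,d\in\mathbb{N}$ with $d\ge 1$, and let $\mathbf{X}=\{\mathbf{x}_1,\dots,\mathbf{x}_m\}\subseteq\mathbb{B}^n$ be any dataset in which every example has at least $d+1$ nonzero entries, i.e. $\langle\mathbf{x}_i,\mathbf{x}_i\rangle\ge d+1$ for all $i$. Let $\tilde{\mathbf{K}}^{(d)}$ and $\tilde{\mathbf{K}}^{(d+1)}$ be the $m\times m$ matrices with entries $\tilde\kappa_\wedge^d(\mathbf{x}_i,\mathbf{x}_j)$ and $\tilde\kappa_\wedge^{d+1}(\mathbf{x}_i,\mathbf{x}_j)$. Then $\tilde\kappa_\wedge^d(\mathbf{x}_i,\mathbf{x}_j)^2\ge\tilde\kappa_\wedge^{d+1}(\mathbf{x}_i,\mathbf{x}_j)^2$ for all $i,j$, and consequently $\mathcal{C}(\tilde{\mathbf{K}}^{(d)})\le\mathcal{C}(\tilde{\mathbf{K}}^{(d+1)})$. In other words, $\tilde\kappa_\wedge^d$ is more general than $\tilde\kappa_\wedge^{d+1}$.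
   Context: $\mathbb{B}=\{0,1\}$. For $\mathbf{x},\mathbf{z}\in\mathbb{B}^n$, $\langle\mathbf{x},\mathbf{z}\rangle=\sum_i x_iz_i$. The Conjunctive kernel (C-Kernel) of arity $d$ is $\kappa_\wedge^d(\mathbf{x},\mathbf{z})=\binom{\langle\mathbf{x},\mathbf{z}\rangle}{d}$; equivalently it is the inner product of the feature maps $\phi_\wedge^d(\mathbf{x})=(\prod_{i=1}^n x_i^{b_i})_{\mathbf{b}\in\mathbb{B}_d}$, where $\mathbb{B}_d=\{\mathbf{b}\in\mathbb{B}^n:\|\mathbf{b}\|_1=d\}$ (each feature is the conjunction of the $d$ variables selected by $\mathbf{b}$). For a kernel $\kappa$, its normalized version is $\tilde\kappa(\mathbf{x},\mathbf{z})=\kappa(\mathbf{x},\mathbf{z})/\sqrt{\kappa(\mathbf{x},\mathbf{x})\kappa(\mathbf{z},\mathbf{z})}$ (defined when $\kappa(\mathbf{x},\mathbf{x}),\kappa(\mathbf{z},\mathbf{z})>0$). The spectral ratio of a positive semidefinite matrix $\mathbf{K}\in\mathbb{R}^{m\times m}$ is $\mathcal{C}(\mathbf{K})=\|\mathbf{K}\|_T/\|\mathbf{K}\|_F=\sum_i\mathbf{K}_{ii}/\sqrt{\sum_{i,j}\mathbf{K}_{ij}^2}$. A kernel $\kappa_1$ is said to be more general than $\kappa_2$ if $\mathcal{C}(\mathbf{K}^{(1)}_{\mathbf{X}})\le\mathcal{C}(\mathbf{K}^{(2)}_{\mathbf{X}})$ for the kernel matrices on the datasets under consideration. *)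

theory Defs
  imports Complex_Main
begin

text \<open>Binary vectors in B^n are represented as functions nat => nat whose
  values on the index set {0..<n} lie in {0,1}.\<close>
definition is_binvec :: "nat \<Rightarrow> (nat \<Rightarrow> nat) \<Rightarrow> bool" where
  "is_binvec n x \<longleftrightarrow> (\<forall>i<n. x i \<in> {0, 1})"

definition binner :: "nat \<Rightarrow> (nat \<Rightarrow> nat) \<Rightarrow> (nat \<Rightarrow> nat) \<Rightarrow> nat" where
  "binner n x z = (\<Sum>i<n. x i * z i)"

definition ckernel :: "nat \<Rightarrow> nat \<Rightarrow> (nat \<Rightarrow> nat) \<Rightarrow> (nat \<Rightarrow> nat) \<Rightarrow> real" where
  "ckernel n d x z = real (binner n x z choose d)"

definition normalized_kernel :: "('a \<Rightarrow> 'a \<Rightarrow> real) \<Rightarrow> 'a \<Rightarrow> 'a \<Rightarrow> real" where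
  "normalized_kernel k x z = k x z / sqrt (k x x * k z z)"

text \<open>Spectral ratio of an m x m matrix (given by its entries K i j, i,j < m):
  trace norm (= trace for PSD) divided by Frobenius norm.\<close>
definition spectral_ratio :: "nat \<Rightarrow> (nat \<Rightarrow> nat \<Rightarrow> real) \<Rightarrow> real" where
  "spectral_ratio m K = (\<Sum>i<m. K i i) / sqrt (\<Sum>i<m. \<Sum>j<m. (K i j)^2)"

end

theory Submission imports Defs begin
lemma choose_step: "Suc d * (n choose Suc d) = (n - d) * (n choose d)"
  by (simp only: binomial_absorption binomial_absorb_comp)

lemma choose_step_real: "real (n choose Suc d) = real (n - d) * real (n choose d) / real (Suc d)"
proof -
  have "real (Suc d) * real (n choose Suc d) = real (n - d) * real (n choose d)"
    using arg_cong[OF choose_step[of d n], of real] by (simp only: of_nat_mult)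
  then show ?thesis by (simp add: eq_divide_eq mult.commute)
qed

lemma sq_div_sqrt: "y \<ge> 0 \<Longrightarrow> z \<ge> 0 \<Longrightarrow> ((x::real) / sqrt (y*z))^2 = x^2/(y*z)"
  by (simp add: power_divide)

lemma key:
  fixes a b c d :: nat
  assumes "c \<le> a" "c \<le> b" "d + 1 \<le> a" "d + 1 \<le> b"
  shows "(real (c choose Suc d) / sqrt (real (a choose Suc d) * real (b choose Suc d)))^2
       \<le> (real (c choose d) / sqrt (real (a choose d) * real (b choose d)))^2"
proof -
  define A where "A = real (a choose d)"
  define B where "B = real (b choose d)"
  define C where "C = real (c choose d)"
  define k where "k = real (Suc d)"
  define p where "p = real (a - d)"
  define q where "q = real (b - d)"
  define r where "r = real (c - d)"
  have A: "A > 0" unfolding A_def using assms by simp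
  have B: "B > 0" unfolding B_def using assms by simp
  have k: "k > 0" unfolding k_def by simp
  have p: "p > 0" unfolding p_def using assms by simp
  have q: "q > 0" unfolding q_def using assms by simp
  have r: "r \<ge> 0" unfolding r_def by simp
  have rp: "r \<le> p" unfolding r_def p_def using assms by simp
  have rq: "r \<le> q" unfolding r_def q_def using assms by simp
  have rr: "r * r \<le> p * q" using mult_mono[OF rp rq] r p by simp
  have ca: "real (a choose Suc d) = p*A/k" unfolding p_def A_def k_def by (rule choose_step_real)
  have cb: "real (b choose Suc d) = q*B/k" unfolding q_def B_def k_def by (rule choose_step_real)
  have cc: "real (c choose Suc d) = r*C/k" unfolding r_def C_def k_def by (rule choose_step_real)
  have e1: "(real (c choose d) / sqrt (real (a choose d) * real (b choose d)))^2 = C^2 / (A*B)"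
    unfolding A_def[symmetric] B_def[symmetric] C_def[symmetric]
    using A B by (simp add: sq_div_sqrt)
  have "(real (c choose Suc d) / sqrt (real (a choose Suc d) * real (b choose Suc d)))^2
      = (r*C/k)^2 / ((p*A/k)*(q*B/k))"
    unfolding ca cb cc using A B p q k by (intro sq_div_sqrt) auto
  also have "\<dots> = (C^2/(A*B)) * ((r*r)/(p*q))"
    using A B p q k by (simp add: field_simps power2_eq_square)
  also have "\<dots> \<le> (C^2/(A*B)) * 1"
    apply (rule mult_left_mono)
    using rr p q A B by (auto simp: divide_le_eq_1)
  finally show ?thesis using e1 by simp
qed

lemma binner_le:
  assumes "is_binvec n x" "is_binvec n z"
  shows "binner n x z \<le> binner n x x"
  unfolding binner_def
proof (rule sum_mono)
  fix i assume "i \<in> {..<n}"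
  then have "x i \<in> {0,1}" "z i \<in> {0,1}" using assms unfolding is_binvec_def by auto
  then show "x i * z i \<le> x i * x i" by auto
qed

lemma binner_sym: "binner n x z = binner n z x"
  unfolding binner_def by (simp add: mult.commute)

lemma nk_eq: "normalized_kernel (ckernel n d) x z =
   real (binner n x z choose d) / sqrt (real (binner n x x choose d) * real (binner n z z choose d))"
  unfolding normalized_kernel_def ckernel_def by simp

lemma nk_diag:
  assumes "d \<le> binner n x x"
  shows "normalized_kernel (ckernel n d) x x = 1"
proof -
  have "real (binner n x x choose d) > 0" using assms by simp
  then show ?thesis unfolding nk_eq by simp
qed

theorem mainTheorem1:
  fixes n d m :: nat and X :: "nat \<Rightarrow> (nat \<Rightarrow> nat)"
  assumes "d \<ge> 1"
    and "\<And>i. i < m \<Longrightarrow> is_binvec n (X i)"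
    and "\<And>i. i < m \<Longrightarrow> binner n (X i) (X i) \<ge> d + 1"
  shows "(\<forall>i<m. \<forall>j<m.
            (normalized_kernel (ckernel n d) (X i) (X j))^2
              \<ge> (normalized_kernel (ckernel n (d + 1)) (X i) (X j))^2)
       \<and> spectral_ratio m (\<lambda>i j. normalized_kernel (ckernel n d) (X i) (X j))
           \<le> spectral_ratio m (\<lambda>i j. normalized_kernel (ckernel n (d + 1)) (X i) (X j))"
proof -
  define K where "K = (\<lambda>i j. normalized_kernel (ckernel n d) (X i) (X j))"
  define L where "L = (\<lambda>i j. normalized_kernel (ckernel n (d + 1)) (X i) (X j))"
  have pw: "(K i j)^2 \<ge> (L i j)^2" if "i < m" "j < m" for i j
  proof -
    have "binner n (X i) (X j) \<le> binner n (X i) (X i)"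
      using binner_le assms(2) that by blast
    moreover have "binner n (X i) (X j) \<le> binner n (X j) (X j)"
      using binner_le[of n "X j" "X i"] assms(2) that by (simp add: binner_sym)
    ultimately show ?thesis
      unfolding K_def L_def nk_eq using key assms(3) that by simp
  qed
  have dK: "K i i = 1" if "i < m" for i
    unfolding K_def using nk_diag assms(3) that by (metis add_leD1)
  have dL: "L i i = 1" if "i < m" for i
    unfolding L_def using nk_diag assms(3) that by metis
  have trK: "(\<Sum>i<m. K i i) = real m" using dK by simp
  have trL: "(\<Sum>i<m. L i i) = real m" using dL by simp
  have SS: "(\<Sum>i<m. \<Sum>j<m. (L i j)^2) \<le> (\<Sum>i<m. \<Sum>j<m. (K i j)^2)"
    by (intro sum_mono) (use pw in auto)
  have ratio: "spectral_ratio m K \<le> spectral_ratio m L"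
  proof (cases "m = 0")
    case True then show ?thesis unfolding spectral_ratio_def by simp
  next
    case False
    have "(L 0 0)^2 \<le> (\<Sum>j<m. (L 0 j)^2)"
      using False by (intro member_le_sum) auto
    also have "\<dots> \<le> (\<Sum>i<m. \<Sum>j<m. (L i j)^2)"
      using False by (intro member_le_sum[where i=0 and f="\<lambda>i. \<Sum>j<m. (L i j)^2"]) (auto intro: sum_nonneg)
    finally have pos: "(\<Sum>i<m. \<Sum>j<m. (L i j)^2) \<ge> 1" using dL False by simp
    have "sqrt (\<Sum>i<m. \<Sum>j<m. (L i j)^2) \<le> sqrt (\<Sum>i<m. \<Sum>j<m. (K i j)^2)"
      using SS by simp
    moreover have "sqrt (\<Sum>i<m. \<Sum>j<m. (L i j)^2) > 0" using pos by simp
    ultimately show ?thesis unfolding spectral_ratio_def trK trL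
      by (intro divide_left_mono) auto
  qed
  show ?thesis using pw ratio unfolding K_def L_def by blast
qed

end
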